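(* Let $p\ge1$ and let $\mathcal A=(A_n)_{n\ge0}$ be a sequence of positive invertible $p\times p$ matrices with $\sup_n\|A_n\|<\infty$ such that the matrix-valued weighted shift $W_{\mathcal A}$ on $\ell^2(\mathbb C^p)$ is cubically hyponormal. Suppose that $A_kx=A_{k+1}x$ for some unit vector $x\in\mathbb C^p$ and some $k\ge1$. Then $A_nx=A_kx$ for every $n\ge k$.
   Context: $\ell^2(\mathbb C^p)=\{(x_n)_{n\ge0}: x_n\in\mathbb C^p,\ \sum_n\|x_n\|^2<\infty\}$; the matrix-valued weighted shift is $W_{\mathcal A}(x_0,x_1,\dots)=(0,A_0x_0,A_1x_1,\dots)$. A bounded operator $T$ is hyponormal if $T^*T-TT^*\ge0$, and cubically hyponormal if $T+\lambda T^2+\mu T^3$ is hyponormal for all $\lambda,\mu\in\mathbb C$. *)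

theory Defs
  imports "HOL-Analysis.Analysis"
begin

text \<open>Vectors of C^p are modelled as complex^'p for a finite index type 'p (p = CARD('p) >= 1).
  Standard inner product on C^p, linear in the first argument.\<close>
definition vinner :: "complex^'p \<Rightarrow> complex^'p \<Rightarrow> complex" where
  "vinner x y = (\<Sum>i\<in>UNIV. x $ i * cnj (y $ i))"

definition pos_matrix :: "complex^'p^'p \<Rightarrow> bool" where
  "pos_matrix A \<longleftrightarrow> (\<forall>v. vinner (A *v v) v \<in> \<real> \<and> 0 \<le> Re (vinner (A *v v) v))"

definition ell2 :: "(nat \<Rightarrow> complex^'p) set" where
  "ell2 = {f. summable (\<lambda>n. (norm (f n))^2)}"

definition l2inner :: "(nat \<Rightarrow> complex^'p) \<Rightarrow> (nat \<Rightarrow> complex^'p) \<Rightarrow> complex" where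
  "l2inner f g = (\<Sum>n. vinner (f n) (g n))"

definition wshift :: "(nat \<Rightarrow> complex^'p^'p) \<Rightarrow> (nat \<Rightarrow> complex^'p) \<Rightarrow> (nat \<Rightarrow> complex^'p)" where
  "wshift A f = (\<lambda>n. if n = 0 then 0 else A (n - 1) *v f (n - 1))"

definition is_adjoint ::
  "((nat \<Rightarrow> complex^'p) \<Rightarrow> (nat \<Rightarrow> complex^'p)) \<Rightarrow> ((nat \<Rightarrow> complex^'p) \<Rightarrow> (nat \<Rightarrow> complex^'p)) \<Rightarrow> bool" where
  "is_adjoint T S \<longleftrightarrow> (\<forall>g\<in>ell2. S g \<in> ell2) \<and>
     (\<forall>f\<in>ell2. \<forall>g\<in>ell2. l2inner (T f) g = l2inner f (S g))"

definition hyponormal :: "((nat \<Rightarrow> complex^'p) \<Rightarrow> (nat \<Rightarrow> complex^'p)) \<Rightarrow> bool" where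
  "hyponormal T \<longleftrightarrow> (\<forall>f\<in>ell2. T f \<in> ell2) \<and>
     (\<exists>S. is_adjoint T S \<and>
        (\<forall>f\<in>ell2. l2inner (S (T f) - T (S f)) f \<in> \<real> \<and> 0 \<le> Re (l2inner (S (T f) - T (S f)) f)))"

definition cubic_comb ::
  "((nat \<Rightarrow> complex^'p) \<Rightarrow> (nat \<Rightarrow> complex^'p)) \<Rightarrow> complex \<Rightarrow> complex \<Rightarrow> (nat \<Rightarrow> complex^'p) \<Rightarrow> (nat \<Rightarrow> complex^'p)" where
  "cubic_comb T l m f = (\<lambda>n. T f n + l *s T (T f) n + m *s T (T (T f)) n)"

definition cubically_hyponormal :: "((nat \<Rightarrow> complex^'p) \<Rightarrow> (nat \<Rightarrow> complex^'p)) \<Rightarrow> bool" where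
  "cubically_hyponormal T \<longleftrightarrow> (\<forall>l m. hyponormal (cubic_comb T l m))"

end

theory Submission
  imports Defs
begin


section \<open>Inner product algebra\<close>

lemma vinner_cnj: "vinner (x::complex^'p) y = cnj (vinner y x)"
  by (simp add: vinner_def mult.commute)

lemma vinner_add_left: "vinner (x + y) (z::complex^'p) = vinner x z + vinner y z"
  by (simp add: vinner_def distrib_right sum.distrib)

lemma vinner_add_right: "vinner z (x + y::complex^'p) = vinner z x + vinner z y"
  by (simp add: vinner_def distrib_left sum.distrib)

lemma vinner_diff_left: "vinner (x - y) (z::complex^'p) = vinner x z - vinner y z"
  by (simp add: vinner_def left_diff_distrib sum_subtractf)

lemma vinner_diff_right: "vinner z (x - y::complex^'p) = vinner z x - vinner z y"
  by (simp add: vinner_def right_diff_distrib sum_subtractf)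

lemma vinner_scale_left: "vinner (a *s x) (z::complex^'p) = a * vinner x z"
  by (simp add: vinner_def sum_distrib_left mult.assoc)

lemma vinner_scale_right: "vinner z (a *s x::complex^'p) = cnj a * vinner z x"
  by (simp add: vinner_def sum_distrib_left mult_ac)

lemma vinner_zero_left [simp]: "vinner 0 (z::complex^'p) = 0"
  by (simp add: vinner_def)

lemma vinner_zero_right [simp]: "vinner z (0::complex^'p) = 0"
  by (simp add: vinner_def)

lemma vinner_neg_left: "vinner (- x) (z::complex^'p) = - vinner x z"
  by (simp add: vinner_def sum_negf)

lemma vinner_neg_right: "vinner z (- x::complex^'p) = - vinner z x"
  by (simp add: vinner_def sum_negf)

lemmas vinner_lin = vinner_add_left vinner_add_right vinner_diff_left vinner_diff_right
  vinner_scale_left vinner_scale_right vinner_neg_left vinner_neg_right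

lemma vinner_self: "vinner (x::complex^'p) x = complex_of_real ((norm x)^2)"
proof -
  have "vinner x x = (\<Sum>i\<in>UNIV. complex_of_real ((norm (x$i))^2))"
    unfolding vinner_def
    by (rule sum.cong) (simp_all add: complex_norm_square[symmetric] del: of_real_power)
  also have "\<dots> = complex_of_real (\<Sum>i\<in>UNIV. (norm (x$i))^2)" by simp
  also have "(\<Sum>i\<in>UNIV. (norm (x$i))^2) = (norm x)^2"
    unfolding norm_vec_def L2_set_def
    by (simp add: sum_nonneg)
  finally show ?thesis .
qed

lemma vinner_self_Re: "Re (vinner (x::complex^'p) x) = (norm x)^2"
  by (simp add: vinner_self)

lemma vinner_self_Im: "Im (vinner (x::complex^'p) x) = 0"
  by (simp add: vinner_self)

lemma vinner_self_eq0: "vinner (x::complex^'p) x = 0 \<longleftrightarrow> x = 0"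
  by (simp add: vinner_self)

lemma vinner_Re_sym: "Re (vinner (x::complex^'p) y) = Re (vinner y x)"
  by (subst vinner_cnj) simp

definition herm :: "complex^'p^'p \<Rightarrow> bool" where
  "herm M \<longleftrightarrow> (\<forall>a b. vinner (M *v a) b = vinner a (M *v b))"

lemma pos_herm:
  assumes "pos_matrix (M::complex^'p^'p)"
  shows "herm M"
  unfolding herm_def
proof (intro allI)
  fix x y :: "complex^'p"
  define s where "s a b = vinner (M *v a) b" for a b
  have real: "Im (s a a) = 0" for a
    using assms unfolding pos_matrix_def s_def by (metis Reals_cases Im_complex_of_real)
  have e1: "s (x + y) (x + y) = s x x + s y y + s x y + s y x"
    unfolding s_def by (simp add: matrix_vector_right_distrib vinner_add_left vinner_add_right)
  have e2: "s (x + \<i> *s y) (x + \<i> *s y) = s x x + s y y - \<i> * s x y + \<i> * s y x"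
    unfolding s_def by (simp add: matrix_vector_right_distrib vinner_add_left vinner_add_right
        vector_scalar_commute vinner_scale_left vinner_scale_right algebra_simps)
  have i1: "Im (s x y) + Im (s y x) = 0" using real[of "x+y"] real[of x] real[of y] e1 by simp
  have i2: "Re (s y x) - Re (s x y) = 0" using real[of "x+ \<i> *s y"] real[of x] real[of y] e2 by simp
  have "s y x = cnj (s x y)" using i1 i2 by (simp add: complex_eq_iff)
  then show "vinner (M *v x) y = vinner x (M *v y)"
    unfolding s_def by (metis vinner_cnj complex_cnj_cnj)
qed

lemma small_le0:
  fixes a b :: real
  assumes "\<And>e. e > 0 \<Longrightarrow> a \<le> e * b"
  shows "a \<le> 0"
proof (rule ccontr)
  assume "\<not> a \<le> 0"
  hence a: "a > 0" by simp
  define e where "e = a / (2 * (\<bar>b\<bar> + 1))"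
  have e: "e > 0" using a by (simp add: e_def)
  have "e * b \<le> e * \<bar>b\<bar>" using e by (simp add: mult_left_mono)
  also have "\<dots> < a"
  proof -
    have "e * \<bar>b\<bar> = a * (\<bar>b\<bar> / (2 * (\<bar>b\<bar> + 1)))" by (simp add: e_def)
    also have "\<dots> < a * 1"
      using a by (intro mult_strict_left_mono) (auto simp: field_simps)
    finally show ?thesis by simp
  qed
  finally show False using assms[OF e] by simp
qed

lemma herm_move: "herm M \<Longrightarrow> vinner (M *v a) b = vinner a (M *v b)"
  by (simp add: herm_def)

lemma expand_sq:
  fixes M :: "complex^'p^'p"
  shows "vinner (M *v (v + t *s q)) (v + t *s q)
        = vinner (M *v v) v + cnj t * vinner (M *v v) q + t * vinner (M *v q) v
          + t * cnj t * vinner (M *v q) q"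
  by (simp add: matrix_vector_right_distrib vector_scalar_commute vinner_add_left
          vinner_add_right vinner_scale_left vinner_scale_right algebra_simps)

lemma psd_zero:
  fixes M :: "complex^'p^'p"
  assumes h: "herm M"
    and psd: "\<And>z. z \<in> S \<Longrightarrow> 0 \<le> Re (vinner (M *v z) z)"
    and vS: "v \<in> S" and qS: "M *v v \<in> S"
    and z: "Re (vinner (M *v v) v) = 0"
    and add: "\<And>a b. a \<in> S \<Longrightarrow> b \<in> S \<Longrightarrow> a + b \<in> S"
    and sc: "\<And>(r::real) a. a \<in> S \<Longrightarrow> complex_of_real r *s a \<in> S"
  shows "M *v v = 0"
proof -
  define q where "q = M *v v"
  define a where "a = Re (vinner (M *v q) q)"
  have key: "(norm q)^2 \<le> e * (a / 2)" if e: "e > 0" for e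
  proof -
    let ?t = "complex_of_real (- e)"
    have zS: "v + ?t *s q \<in> S" using vS qS add sc unfolding q_def by blast
    have "vinner (M *v (v + ?t *s q)) (v + ?t *s q)
        = vinner (M *v v) v + ?t * vinner (M *v v) q + ?t * vinner (M *v q) v
          + ?t * ?t * vinner (M *v q) q"
      using expand_sq[of M v ?t q] by simp
    also have "vinner (M *v q) v = vinner q q" using herm_move[OF h] q_def by simp
    also have "vinner (M *v v) q = vinner q q" using q_def by simp
    finally have eq: "vinner (M *v (v + ?t *s q)) (v + ?t *s q)
        = vinner (M *v v) v + ?t * vinner q q + ?t * vinner q q + ?t * ?t * vinner (M *v q) q" .
    have "0 \<le> Re (vinner (M *v (v + ?t *s q)) (v + ?t *s q))" using psd[OF zS] .
    also have "\<dots> = - 2 * e * (norm q)^2 + e * e * a"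
      unfolding eq using z by (simp add: vinner_self a_def)
    finally have "2 * e * (norm q)^2 \<le> e * e * a" by simp
    hence "e * (2 * (norm q)^2) \<le> e * (e * a)" by (simp add: algebra_simps)
    hence "2 * (norm q)^2 \<le> e * a" using e by simp
    thus ?thesis by simp
  qed
  have "(norm q)^2 \<le> 0" by (rule small_le0[OF key])
  hence "q = 0" by simp
  thus ?thesis by (simp add: q_def)
qed

section \<open>Hyponormality consequences\<close>

lemma fin_ell2:
  assumes "finite F" "\<And>n. n \<notin> F \<Longrightarrow> f n = 0"
  shows "f \<in> ell2"
  unfolding ell2_def using assms by (auto intro!: summable_finite[of F])

lemma l2inner_fin:
  assumes "finite F" "\<And>n. n \<notin> F \<Longrightarrow> f n = 0"
  shows "l2inner g f = (\<Sum>n\<in>F. vinner (g n) (f n))"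
  unfolding l2inner_def using assms by (intro suminf_finite) auto

lemma l2inner_fin_left:
  assumes "finite F" "\<And>n. n \<notin> F \<Longrightarrow> g n = 0"
  shows "l2inner g f = (\<Sum>n\<in>F. vinner (g n) (f n))"
  unfolding l2inner_def using assms by (intro suminf_finite) auto

lemma l2inner_self_Re:
  assumes "g \<in> ell2"
  shows "Re (l2inner g g) = (\<Sum>n. (norm (g n))^2)"
proof -
  have s: "summable (\<lambda>n. (norm (g n))^2)" using assms by (simp add: ell2_def)
  have "l2inner g g = (\<Sum>n. complex_of_real ((norm (g n))^2))"
    unfolding l2inner_def by (simp add: vinner_self)
  also have "\<dots> = complex_of_real (\<Sum>n. (norm (g n))^2)"
    by (rule suminf_of_real[OF s, symmetric])
  finally show ?thesis by simp
qed

lemma sq_ge: "2 * Re (vinner (h::complex^'p) g) - (norm h)^2 \<le> (norm g)^2"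
proof -
  have e: "vinner (g - h) (g - h) = vinner g g - vinner g h - vinner h g + vinner h h"
    by (simp add: vinner_diff_left vinner_diff_right)
  have "0 \<le> Re (vinner (g - h) (g - h))" by (simp add: vinner_self)
  also have "\<dots> = (norm g)^2 - Re (vinner g h) - Re (vinner h g) + (norm h)^2"
    unfolding e by (simp add: vinner_self)
  also have "Re (vinner g h) = Re (vinner h g)" by (rule vinner_Re_sym)
  finally show ?thesis by simp
qed

lemma hyp_ineq:
  assumes hyp: "hyponormal T"
    and F: "finite F" "\<And>n. n \<notin> F \<Longrightarrow> f n = 0"
    and G: "finite G" "\<And>n. n \<notin> G \<Longrightarrow> T f n = 0"
    and H: "finite H" "\<And>n. n \<notin> H \<Longrightarrow> h n = 0"
  shows "2 * Re (\<Sum>n\<in>F. vinner (T h n) (f n)) - (\<Sum>n\<in>H. (norm (h n))^2)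
           \<le> (\<Sum>n\<in>G. (norm (T f n))^2)"
proof -
  obtain S where adj: "is_adjoint T S"
    and ps: "\<And>f. f \<in> ell2 \<Longrightarrow> 0 \<le> Re (l2inner (S (T f) - T (S f)) f)"
    using hyp unfolding hyponormal_def by blast
  have fE: "f \<in> ell2" using F by (rule fin_ell2)
  have hE: "h \<in> ell2" using H by (rule fin_ell2)
  have TfE: "T f \<in> ell2" using G by (rule fin_ell2)
  have adjp: "\<And>a b. a \<in> ell2 \<Longrightarrow> b \<in> ell2 \<Longrightarrow> l2inner (T a) b = l2inner a (S b)"
    and SE: "\<And>b. b \<in> ell2 \<Longrightarrow> S b \<in> ell2"
    using adj unfolding is_adjoint_def by auto
  define g where "g = S f"
  have gE: "g \<in> ell2" using SE[OF fE] by (simp add: g_def)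
  have split: "l2inner (S (T f) - T g) f = l2inner (S (T f)) f - l2inner (T g) f"
    using F by (simp add: l2inner_fin vinner_diff_left sum_subtractf)
  have one: "l2inner (S (T f)) f = cnj (l2inner (T f) (T f))"
  proof -
    have "l2inner (T f) (T f) = l2inner f (S (T f))" using adjp[OF fE TfE] .
    also have "\<dots> = (\<Sum>n\<in>F. vinner (f n) (S (T f) n))" using F by (rule l2inner_fin_left)
    also have "\<dots> = cnj (\<Sum>n\<in>F. vinner (S (T f) n) (f n))"
      by (simp add: vinner_cnj[of "f _"])
    also have "(\<Sum>n\<in>F. vinner (S (T f) n) (f n)) = l2inner (S (T f)) f"
      using F by (simp add: l2inner_fin)
    finally show ?thesis by simp
  qed
  have oneR: "Re (l2inner (S (T f)) f) = (\<Sum>n\<in>G. (norm (T f n))^2)"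
    unfolding one using G by (simp add: l2inner_fin vinner_self)
  have two: "l2inner (T g) f = l2inner g g" using adjp[OF gE fE] by (simp add: g_def)
  have twoR: "Re (l2inner (T g) f) = (\<Sum>n. (norm (g n))^2)"
    unfolding two using gE by (rule l2inner_self_Re)
  have three: "(\<Sum>n\<in>H. (norm (g n))^2) \<le> (\<Sum>n. (norm (g n))^2)"
    using gE H by (intro sum_le_suminf) (auto simp: ell2_def)
  have four: "(\<Sum>n\<in>F. vinner (T h n) (f n)) = (\<Sum>n\<in>H. vinner (h n) (g n))"
  proof -
    have "(\<Sum>n\<in>F. vinner (T h n) (f n)) = l2inner (T h) f" using F by (simp add: l2inner_fin)
    also have "\<dots> = l2inner h g" using adjp[OF hE fE] by (simp add: g_def)
    also have "\<dots> = (\<Sum>n\<in>H. vinner (h n) (g n))" using H by (rule l2inner_fin_left)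
    finally show ?thesis .
  qed
  have five: "2 * Re (\<Sum>n\<in>H. vinner (h n) (g n)) - (\<Sum>n\<in>H. (norm (h n))^2)
      \<le> (\<Sum>n\<in>H. (norm (g n))^2)"
  proof -
    have "2 * Re (\<Sum>n\<in>H. vinner (h n) (g n)) - (\<Sum>n\<in>H. (norm (h n))^2)
        = (\<Sum>n\<in>H. 2 * Re (vinner (h n) (g n)) - (norm (h n))^2)"
      by (simp add: sum_subtractf sum_distrib_left)
    also have "\<dots> \<le> (\<Sum>n\<in>H. (norm (g n))^2)" by (intro sum_mono sq_ge)
    finally show ?thesis .
  qed
  have "0 \<le> Re (l2inner (S (T f) - T g) f)" using ps[OF fE] by (simp add: g_def)
  hence "Re (l2inner (T g) f) \<le> Re (l2inner (S (T f)) f)" unfolding split by simp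
  moreover have "Re (\<Sum>n\<in>F. vinner (T h n) (f n)) = Re (\<Sum>n\<in>H. vinner (h n) (g n))"
    using four by simp
  ultimately show ?thesis using oneR twoR three five by linarith
qed

section \<open>Shift computations\<close>

lemma ws_0 [simp]: "wshift A g 0 = 0"
  by (simp add: wshift_def)

lemma ws_Suc [simp]: "wshift A g (Suc n) = A n *v g n"
  by (simp add: wshift_def)

lemma ws_supp:
  assumes "\<And>n. n \<notin> F \<Longrightarrow> g n = 0" "n \<notin> Suc ` F"
  shows "wshift A g n = 0"
proof (cases n)
  case (Suc m)
  then have "m \<notin> F" using assms(2) by auto
  then show ?thesis using assms(1) Suc by simp
qed simp

lemma cc0: "cubic_comb T 0 e g n = T g n + e *s T (T (T g)) n"
  by (simp add: cubic_comb_def)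

lemma cc_supp:
  assumes "\<And>n. n \<notin> F \<Longrightarrow> g n = 0" "n \<notin> Suc ` F \<union> Suc ` Suc ` Suc ` F"
  shows "cubic_comb (wshift A) 0 e g n = 0"
proof -
  have 1: "wshift A g m = 0" if "m \<notin> Suc ` F" for m using ws_supp assms(1) that by blast
  have 2: "wshift A (wshift A g) m = 0" if "m \<notin> Suc ` Suc ` F" for m
    using ws_supp[of "Suc ` F" "wshift A g"] 1 that by blast
  have 3: "wshift A (wshift A (wshift A g)) m = 0" if "m \<notin> Suc ` Suc ` Suc ` F" for m
    using ws_supp[of "Suc ` Suc ` F" "wshift A (wshift A g)"] 2 that by blast
  show ?thesis using 1 3 assms(2) by (simp add: cc0)
qed

lemma herm_sq: "herm M \<Longrightarrow> vinner (M *v (M *v z)) z = complex_of_real ((norm (M *v z))^2)"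
  by (simp add: herm_move vinner_self)

lemma hypo_basic:
  assumes cub: "cubically_hyponormal (wshift A)"
    and pos: "\<And>n. pos_matrix (A n)"
  shows "(norm (A k *v z))^2 \<le> (norm (A (Suc k) *v z))^2"
proof -
  let ?T = "cubic_comb (wshift A) 0 0"
  have hyp: "hyponormal ?T" using cub by (simp add: cubically_hyponormal_def)
  define f where "f = (\<lambda>m. if m = Suc k then z else 0)"
  define h where "h = (\<lambda>m. if m = k then A k *v z else 0)"
  have fs: "\<And>n. n \<notin> {Suc k} \<Longrightarrow> f n = 0" by (simp add: f_def)
  have hs: "\<And>n. n \<notin> {k} \<Longrightarrow> h n = 0" by (simp add: h_def)
  have GG: "Suc ` {Suc k} \<union> Suc ` Suc ` Suc ` {Suc k} = {Suc (Suc k), Suc (Suc (Suc (Suc k)))}"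
    by (simp add: insert_commute)
  have Gs: "\<And>n. n \<notin> {Suc (Suc k), Suc (Suc (Suc (Suc k)))} \<Longrightarrow> ?T f n = 0"
  proof -
    fix n assume "n \<notin> {Suc (Suc k), Suc (Suc (Suc (Suc k)))}"
    then have nn: "n \<notin> Suc ` {Suc k} \<union> Suc ` Suc ` Suc ` {Suc k}" unfolding GG .
    show "?T f n = 0" by (rule cc_supp[of "{Suc k}" f, OF fs nn])
  qed
  have ineq: "2 * Re (\<Sum>n\<in>{Suc k}. vinner (?T h n) (f n)) - (\<Sum>n\<in>{k}. (norm (h n))^2)
           \<le> (\<Sum>n\<in>{Suc (Suc k), Suc (Suc (Suc (Suc k)))}. (norm (?T f n))^2)"
    by (rule hyp_ineq[OF hyp _ fs _ Gs _ hs]) simp_all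
  have t1: "?T h (Suc k) = A k *v (A k *v z)" by (simp add: cc0 h_def)
  have t2: "?T f (Suc (Suc k)) = A (Suc k) *v z" by (simp add: cc0 f_def)
  have t3: "?T f (Suc (Suc (Suc (Suc k)))) = 0" by (simp add: cc0 f_def)
  have s1: "(\<Sum>n\<in>{Suc k}. vinner (?T h n) (f n)) = complex_of_real ((norm (A k *v z))^2)"
    using t1 herm_sq[OF pos_herm[OF pos], of k z] by (simp add: f_def)
  have s2: "(\<Sum>n\<in>{k}. (norm (h n))^2) = (norm (A k *v z))^2" by (simp add: h_def)
  have s3: "(\<Sum>n\<in>{Suc (Suc k), Suc (Suc (Suc (Suc k)))}. (norm (?T f n))^2)
     = (norm (A (Suc k) *v z))^2" using t2 t3 by simp
  show ?thesis using ineq unfolding s1 s2 s3 by simp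
qed

lemma herm_diff_sq:
  assumes "herm X" "herm Y"
  shows "herm (X ** X - Y ** Y)"
  unfolding herm_def
  by (simp add: matrix_vector_mult_diff_rdistrib matrix_vector_mul_assoc[symmetric]
      vinner_diff_left vinner_diff_right herm_move[OF assms(1)] herm_move[OF assms(2)])

lemma fact1:
  assumes cub: "cubically_hyponormal (wshift A)"
    and pos: "\<And>n. pos_matrix (A n)"
    and v: "A (Suc k) *v v = A k *v v"
  shows "A (Suc k) *v (A k *v v) = A k *v (A k *v v)"
proof -
  define M where "M = A (Suc k) ** A (Suc k) - A k ** A k"
  have hM: "herm M" unfolding M_def by (intro herm_diff_sq pos_herm pos)
  have Mz: "Re (vinner (M *v z) z) = (norm (A (Suc k) *v z))^2 - (norm (A k *v z))^2" for z
    unfolding M_def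
    by (simp add: matrix_vector_mult_diff_rdistrib matrix_vector_mul_assoc[symmetric]
      vinner_diff_left herm_sq[OF pos_herm[OF pos]])
  have "M *v v = 0"
    by (rule psd_zero[OF hM, where S=UNIV]) (use Mz hypo_basic[OF cub pos] v in auto)
  hence "A (Suc k) *v (A (Suc k) *v v) = A k *v (A k *v v)"
    unfolding M_def by (simp add: matrix_vector_mult_diff_rdistrib matrix_vector_mul_assoc[symmetric])
  thus ?thesis using v by simp
qed

lemma mv_neg [simp]: "(M::'a::field^'n^'m) *v (- x) = - (M *v x)"
  using matrix_vector_mult_diff_distrib[of M 0 x] by simp

lemma nsq: "(norm (x::complex^'p))^2 = Re (vinner x x)"
  by (simp add: vinner_self)

lemma stepA_ineq:
  assumes cub: "cubically_hyponormal (wshift A)"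
    and pos: "\<And>n. pos_matrix (A n)"
    and inv: "invertible (A j)"
    and c: "c > 0"
    and v1: "A (Suc j) *v v = complex_of_real c *s v"
    and v2: "A (Suc (Suc j)) *v v = complex_of_real c *s v"
    and eps: "\<epsilon> > 0"
  shows "\<epsilon>^2 * c^2 * (norm (A (Suc (Suc (Suc j))) *v (A (Suc (Suc (Suc j))) *v v))^2
            - 2 * c^2 * (norm (A (Suc (Suc (Suc j))) *v v))^2 + c^4 * (norm v)^2)
         \<le> \<epsilon>^4 * (c^10 * (norm v)^2 + (norm (A (Suc (Suc (Suc (Suc (Suc (Suc j)))))) *v
             (A (Suc (Suc (Suc (Suc (Suc j))))) *v (A (Suc (Suc (Suc (Suc j)))) *v
               ((- complex_of_real c) *s (A (Suc (Suc (Suc j))) *v v))))))^2)"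
proof -
  define e where "e = complex_of_real \<epsilon>"
  define cr where "cr = complex_of_real c"
  define P where "P = A j"
  define C1 where "C1 = A (Suc j)"
  define C2 where "C2 = A (Suc (Suc j))"
  define B where "B = A (Suc (Suc (Suc j)))"
  define G where "G = A (Suc (Suc (Suc (Suc j))))"
  have v1c: "A (Suc j) *v v = cr *s v" using v1 by (simp add: cr_def)
  have v2c: "A (Suc (Suc j)) *v v = cr *s v" using v2 by (simp add: cr_def)
  obtain Pinv where Pinv: "P ** Pinv = mat 1" using inv unfolding invertible_def P_def by blast
  define u where "u = Pinv *v ((- (cr ^ 3)) *s v)"
  have Pu: "P *v u = (- (cr ^ 3)) *s v"
    unfolding u_def by (simp add: matrix_vector_mul_assoc Pinv)
  define w where "w = (- cr) *s (B *v v)"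
  define j2 where "j2 = Suc (Suc j)"
  define j4 where "j4 = Suc (Suc j2)"
  define f where "f = (\<lambda>m. if m = j then e *s u else if m = j2 then v else if m = j4 then e *s w else 0)"
  define h where "h = (\<lambda>m. if m = Suc j then cr *s v else if m = Suc j2 then e *s (B *v w) else 0)"
  define F where "F = {j, j2, j4}"
  define H where "H = {Suc j, Suc j2}"
  define GG where "GG = {Suc j, Suc j2, Suc j4, Suc (Suc (Suc j4))}"
  let ?T = "cubic_comb (wshift A) 0 e"
  have hyp: "hyponormal ?T" using cub by (simp add: cubically_hyponormal_def)
  have fs: "\<And>n. n \<notin> F \<Longrightarrow> f n = 0" by (simp add: f_def F_def)
  have hs: "\<And>n. n \<notin> H \<Longrightarrow> h n = 0" by (simp add: h_def H_def)
  have GGe: "Suc ` F \<union> Suc ` Suc ` Suc ` F = GG"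
    by (auto simp: F_def GG_def j2_def j4_def)
  have Gs: "\<And>n. n \<notin> GG \<Longrightarrow> ?T f n = 0"
  proof -
    fix n assume "n \<notin> GG"
    then have nn: "n \<notin> Suc ` F \<union> Suc ` Suc ` Suc ` F" unfolding GGe .
    show "?T f n = 0" by (rule cc_supp[of F f, OF fs nn])
  qed
  have ineq: "2 * Re (\<Sum>n\<in>F. vinner (?T h n) (f n)) - (\<Sum>n\<in>H. (norm (h n))^2)
           \<le> (\<Sum>n\<in>GG. (norm (?T f n))^2)"
    by (rule hyp_ineq[OF hyp _ fs _ Gs _ hs]) (simp_all add: F_def H_def GG_def)
  have Bh: "B *v (B *v w) = (- cr) *s (B *v (B *v (B *v v)))"
    unfolding w_def by (simp add: vector_scalar_commute)
  have h_j: "wshift A h j = 0" by (rule ws_supp[of H h, OF hs]) (auto simp: H_def j2_def)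
  have Th_j: "?T h j = 0"
    by (rule cc_supp[of H h, OF hs]) (auto simp: H_def j2_def)
  have Th_j2: "?T h j2 = (cr * cr) *s v"
    using h_j by (simp add: cc0 j2_def h_def vector_scalar_commute v1c vector_smult_assoc)
  have Th_j4: "?T h j4 = (- (e * cr)) *s (B *v (B *v (B *v v))) + (e * cr^3) *s (B *v v)"
    using h_j by (simp add: cc0 j2_def j4_def h_def vector_scalar_commute v1c v2c vector_smult_assoc
        B_def[symmetric] Bh power3_eq_cube mult_ac)
  have f_j: "wshift A (wshift A f) j = 0"
    by (rule ws_supp[of "Suc ` F"], rule ws_supp[of F f, OF fs]) (auto simp: F_def j2_def j4_def)
  have Tf1: "?T f (Suc j) = (- (e * cr^3)) *s v"
    using f_j by (simp add: cc0 f_def vector_scalar_commute P_def[symmetric] Pu vector_smult_assoc)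
  have Tf3: "?T f (Suc j2) = (cr - e * e * cr^5) *s v"
    by (simp add: cc0 f_def j2_def vector_scalar_commute P_def[symmetric] Pu vector_smult_assoc v1c v2c eval_nat_numeral)
  have Tf5: "?T f (Suc j4) = 0"
    by (simp add: cc0 f_def j2_def j4_def vector_scalar_commute vector_smult_assoc v1c v2c w_def
        B_def[symmetric] G_def[symmetric])
  define y7 where "y7 = A (Suc (Suc (Suc (Suc (Suc (Suc j)))))) *v (A (Suc (Suc (Suc (Suc (Suc j))))) *v (G *v w))"
  have Tf7: "?T f (Suc (Suc (Suc j4))) = (e * e) *s y7"
    by (simp add: cc0 f_def j2_def j4_def vector_scalar_commute vector_smult_assoc y7_def
        G_def[symmetric])
  have hB: "herm B" unfolding B_def by (rule pos_herm[OF pos])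
  define N0 where "N0 = (norm v)^2"
  define N1 where "N1 = (norm (B *v v))^2"
  define N2 where "N2 = (norm (B *v (B *v v)))^2"
  define K7 where "K7 = (norm y7)^2"
  have i0: "vinner v v = complex_of_real N0" by (simp add: N0_def vinner_self)
  have i1: "vinner (B *v v) (B *v v) = complex_of_real N1" by (simp add: N1_def vinner_self)
  have i2: "vinner (B *v (B *v (B *v v))) (B *v v) = complex_of_real N2"
    by (simp add: N2_def herm_move[OF hB] vinner_self)
  have i2b: "vinner (B *v (B *v v)) (B *v (B *v v)) = complex_of_real N2"
    by (simp add: N2_def vinner_self)
  have i7: "vinner y7 y7 = complex_of_real K7" by (simp add: K7_def vinner_self)
  have dist: "j \<noteq> j2" "j \<noteq> j4" "j2 \<noteq> j4" by (simp_all add: j2_def j4_def)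
  have sumF: "(\<Sum>n\<in>F. vinner (?T h n) (f n)) = vinner (?T h j) (f j) + vinner (?T h j2) (f j2)
       + vinner (?T h j4) (f j4)"
    using dist by (simp add: F_def)
  have fj2: "f j2 = v" using dist by (simp add: f_def)
  have fj4: "f j4 = (- (e * cr)) *s (B *v v)" using dist
    by (simp add: f_def w_def vector_smult_assoc)
  have SF: "(\<Sum>n\<in>F. vinner (?T h n) (f n)) =
      complex_of_real (c^2 * N0 + \<epsilon>^2 * c^2 * N2 - \<epsilon>^2 * c^4 * N1)"
    unfolding sumF Th_j Th_j2 Th_j4 fj2 fj4
    by (simp add: vinner_lin i0 i1 i2 e_def cr_def algebra_simps eval_nat_numeral)
  have distH: "Suc j \<noteq> Suc j2" by (simp add: j2_def)
  have SH: "(\<Sum>n\<in>H. (norm (h n))^2) = c^2 * N0 + \<epsilon>^2 * c^2 * N2"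
  proof -
    have "(\<Sum>n\<in>H. (norm (h n))^2) = (norm (cr *s v))^2 + (norm ((- (e * cr)) *s (B *v (B *v v))))^2"
      using distH by (simp add: H_def h_def w_def vector_scalar_commute vector_smult_assoc)
    also have "\<dots> = c^2 * N0 + \<epsilon>^2 * c^2 * N2"
      unfolding nsq by (simp add: vinner_lin i0 i2b e_def cr_def algebra_simps
        eval_nat_numeral)
    finally show ?thesis .
  qed
  have distG: "Suc j \<noteq> Suc j2" "Suc j \<noteq> Suc j4" "Suc j \<noteq> Suc (Suc (Suc j4))"
    "Suc j2 \<noteq> Suc j4" "Suc j2 \<noteq> Suc (Suc (Suc j4))" "Suc j4 \<noteq> Suc (Suc (Suc j4))"
    by (simp_all add: j2_def j4_def)
  have SG: "(\<Sum>n\<in>GG. (norm (?T f n))^2) = \<epsilon>^2 * c^6 * N0 + (c - \<epsilon>^2 * c^5)^2 * N0 + \<epsilon>^4 * K7"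
  proof -
    have "(\<Sum>n\<in>GG. (norm (?T f n))^2) = (norm ((- (e * cr^3)) *s v))^2
        + (norm ((cr - e * e * cr^5) *s v))^2 + (norm ((e * e) *s y7))^2"
      using distG by (simp add: GG_def Tf1 Tf3 Tf5 Tf7)
    also have "\<dots> = \<epsilon>^2 * c^6 * N0 + (c - \<epsilon>^2 * c^5)^2 * N0 + \<epsilon>^4 * K7"
      unfolding nsq by (simp add: vinner_lin i0 i7 e_def cr_def algebra_simps
        eval_nat_numeral)
    finally show ?thesis .
  qed
  have main: "2 * (c^2 * N0 + \<epsilon>^2 * c^2 * N2 - \<epsilon>^2 * c^4 * N1) - (c^2 * N0 + \<epsilon>^2 * c^2 * N2)
     \<le> \<epsilon>^2 * c^6 * N0 + (c - \<epsilon>^2 * c^5)^2 * N0 + \<epsilon>^4 * K7"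
    using ineq unfolding SF SH SG by simp
  have K7e: "K7 = (norm (A (Suc (Suc (Suc (Suc (Suc (Suc j)))))) *v
             (A (Suc (Suc (Suc (Suc (Suc j))))) *v (A (Suc (Suc (Suc (Suc j)))) *v
               ((- complex_of_real c) *s (A (Suc (Suc (Suc j))) *v v))))))^2"
    by (simp add: K7_def y7_def G_def w_def cr_def B_def)
  have "\<epsilon>^2 * c^2 * (N2 - 2 * c^2 * N1 + c^4 * N0) \<le> \<epsilon>^4 * (c^10 * N0 + K7)"
    using main by (simp add: algebra_simps eval_nat_numeral)
  then show ?thesis unfolding K7e N0_def N1_def N2_def B_def by simp
qed

lemma stepA:
  assumes cub: "cubically_hyponormal (wshift A)"
    and pos: "\<And>n. pos_matrix (A n)"
    and inv: "invertible (A j)"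
    and c: "c > 0"
    and v1: "A (Suc j) *v v = complex_of_real c *s v"
    and v2: "A (Suc (Suc j)) *v v = complex_of_real c *s v"
  shows "A (Suc (Suc (Suc j))) *v v = complex_of_real c *s v"
proof -
  define B where "B = A (Suc (Suc (Suc j)))"
  define X where "X = (norm (B *v (B *v v)))^2 - 2 * c^2 * (norm (B *v v))^2 + c^4 * (norm v)^2"
  define K where "K = c^10 * (norm v)^2 + (norm (A (Suc (Suc (Suc (Suc (Suc (Suc j)))))) *v
             (A (Suc (Suc (Suc (Suc (Suc j))))) *v (A (Suc (Suc (Suc (Suc j)))) *v
               ((- complex_of_real c) *s (A (Suc (Suc (Suc j))) *v v))))))^2"
  have hB: "herm B" unfolding B_def by (rule pos_herm[OF pos])
  have le: "c^2 * X \<le> e * K" if e: "e > 0" for e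
  proof -
    define \<epsilon> where "\<epsilon> = sqrt e"
    have ep: "\<epsilon> > 0" using e by (simp add: \<epsilon>_def)
    have e2: "\<epsilon>^2 = e" using e by (simp add: \<epsilon>_def)
    have e4: "\<epsilon>^4 = e * e" using e2 by (metis power2_eq_square power_mult numeral_Bit0 mult_2)
    have "e * (c^2 * X) \<le> e * (e * K)"
      using stepA_ineq[OF cub pos inv c v1 v2 ep] unfolding e2 e4 X_def K_def B_def
      by (simp add: algebra_simps)
    thus ?thesis using e by simp
  qed
  have "c^2 * X \<le> 0" by (rule small_le0[OF le])
  moreover have "c^2 > 0" using c by simp
  ultimately have X0: "X \<le> 0" by (simp add: mult_le_0_iff)
  define cr where "cr = complex_of_real c"
  have "Re (vinner (B *v (B *v v) - (cr * cr) *s v) (B *v (B *v v) - (cr * cr) *s v)) = X"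
  proof -
    have hv: "vinner (B *v (B *v v)) v = complex_of_real ((norm (B *v v))^2)"
      by (simp add: herm_move[OF hB] vinner_self)
    have hv2: "vinner v (B *v (B *v v)) = complex_of_real ((norm (B *v v))^2)"
      by (simp add: herm_move[OF hB, symmetric] vinner_self)
    have a0: "vinner v v = complex_of_real ((norm v)^2)" by (rule vinner_self)
    have a2: "vinner (B *v (B *v v)) (B *v (B *v v)) = complex_of_real ((norm (B *v (B *v v)))^2)"
      by (rule vinner_self)
    show ?thesis
      by (simp add: vinner_lin hv hv2 a0 a2 X_def cr_def algebra_simps eval_nat_numeral)
  qed
  hence "(norm (B *v (B *v v) - (cr * cr) *s v))^2 \<le> 0" using X0 by (simp add: nsq)
  hence BB: "B *v (B *v v) = (cr * cr) *s v" by simp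
  define z where "z = B *v v - cr *s v"
  have Bz: "B *v z = (- cr) *s z"
    unfolding z_def by (simp add: matrix_vector_mult_diff_distrib vector_scalar_commute BB
      vector_ssub_ldistrib vector_smult_assoc)
  have "0 \<le> Re (vinner (B *v z) z)" using pos[of "Suc (Suc (Suc j))"]
    unfolding pos_matrix_def B_def by simp
  also have "Re (vinner (B *v z) z) = - c * (norm z)^2"
    unfolding Bz by (simp add: vinner_lin vinner_self cr_def)
  finally have "(norm z)^2 \<le> 0" using c by (simp add: mult_le_0_iff)
  hence "z = 0" by simp
  thus ?thesis by (simp add: z_def B_def cr_def)
qed



section \<open>Spectral part\<close>

definition csub :: "(complex^'p) set \<Rightarrow> bool" where
  "csub S \<longleftrightarrow> 0 \<in> S \<and> (\<forall>a b. a \<in> S \<longrightarrow> b \<in> S \<longrightarrow> a + b \<in> S)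
     \<and> (\<forall>z a. a \<in> S \<longrightarrow> z *s a \<in> S)"

lemma scaleR_cvec: "r *\<^sub>R (a::complex^'n) = complex_of_real r *s a"
proof -
  have "r *\<^sub>R (a$i) = complex_of_real r * a$i" for i by (rule scaleR_conv_of_real)
  then show ?thesis unfolding vec_eq_iff vector_scaleR_component vector_smult_component by simp
qed

lemma csub_subspace: "csub S \<Longrightarrow> subspace S"
  unfolding csub_def subspace_def by (simp add: scaleR_cvec)

lemma csub_diff: "csub S \<Longrightarrow> a \<in> S \<Longrightarrow> b \<in> S \<Longrightarrow> a - b \<in> S"
  unfolding csub_def
  by (metis diff_conv_add_uminus vector_sneg_minus1)

lemma mat_mv: "mat a *v (x::'a::comm_semiring_1^'n) = a *s x"
unfolding vec_eq_iff proof
  fix i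
  have "(mat a *v x)$i = (\<Sum>j\<in>UNIV. (if i = j then a else 0) * x$j)"
    unfolding matrix_vector_mult_def mat_def by simp
  also have "\<dots> = (\<Sum>j\<in>UNIV. if i = j then a * x$j else 0)" by (rule sum.cong) auto
  also have "\<dots> = a * x$i" by simp
  finally show "(mat a *v x)$i = (a *s x)$i" by simp
qed

lemma cont_rq: "continuous_on X (\<lambda>x. Re (vinner ((C::complex^'p^'p) *v x) x))"
  unfolding vinner_def matrix_vector_mult_def
  by (intro continuous_intros)

lemma eig_exists:
  fixes C :: "complex^'p^'p"
  assumes hC: "herm C" and S: "csub S" and inv: "\<And>a. a \<in> S \<Longrightarrow> C *v a \<in> S"
    and a: "a \<in> S" "a \<noteq> 0"
  shows "\<exists>v\<in>S. v \<noteq> 0 \<and> (\<exists>c::real. C *v v = complex_of_real c *s v)"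
proof -
  have sub: "subspace S" using S by (rule csub_subspace)
  have cl: "closed S" using sub by (rule closed_subspace)
  let ?K = "S \<inter> sphere 0 1"
  have cK: "compact ?K" using cl by (intro closed_Int_compact) auto
  have a1: "(1 / norm a) *\<^sub>R a \<in> ?K" using a sub by (simp add: subspace_scale)
  hence ne: "?K \<noteq> {}" by blast
  obtain v where vK: "v \<in> ?K" and vmax: "\<And>y. y \<in> ?K \<Longrightarrow> Re (vinner (C *v y) y) \<le> Re (vinner (C *v v) v)"
    using continuous_attains_sup[OF cK ne cont_rq[of ?K C]] by blast
  define c where "c = Re (vinner (C *v v) v)"
  have vS: "v \<in> S" and vn: "norm v = 1" using vK by auto
  have bound: "Re (vinner (C *v u) u) \<le> c * (norm u)^2" if uS: "u \<in> S" for u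
  proof (cases "u = 0")
    case True then show ?thesis by simp
  next
    case False
    define u' where "u' = (1 / norm u) *\<^sub>R u"
    have "u' \<in> ?K" using False uS sub by (simp add: u'_def subspace_scale)
    hence le: "Re (vinner (C *v u') u') \<le> c" using vmax c_def by blast
    have "vinner (C *v u') u' = complex_of_real ((1 / norm u)^2) * vinner (C *v u) u"
      unfolding u'_def scaleR_cvec by (simp add: vector_scalar_commute vinner_lin power2_eq_square)
    hence "Re (vinner (C *v u') u') = (1 / norm u)^2 * Re (vinner (C *v u) u)" by simp
    with le have "(1 / norm u)^2 * Re (vinner (C *v u) u) \<le> c" by simp
    hence "Re (vinner (C *v u) u) \<le> c * (norm u)^2" using False
      by (simp add: field_simps power2_eq_square)
    then show ?thesis .
  qed
  define M where "M = mat (complex_of_real c) - C"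
  have Mv: "M *v x = complex_of_real c *s x - C *v x" for x
    by (simp add: M_def matrix_vector_mult_diff_rdistrib mat_mv)
  have hM: "herm M" unfolding herm_def Mv
    by (simp add: vinner_lin herm_move[OF hC])
  have "M *v v = 0"
  proof (rule psd_zero[OF hM, where S=S])
    show "0 \<le> Re (vinner (M *v z) z)" if "z \<in> S" for z
      using bound[OF that] by (simp add: Mv vinner_lin vinner_self)
    show "v \<in> S" by (rule vS)
    show "M *v v \<in> S" unfolding Mv
      using S vS inv[OF vS] by (intro csub_diff) (auto simp: csub_def)
    show "Re (vinner (M *v v) v) = 0" by (simp add: Mv vinner_lin vinner_self vn c_def)
    show "a + b \<in> S" if "a \<in> S" "b \<in> S" for a b using S that by (simp add: csub_def)
    show "complex_of_real r *s a \<in> S" if "a \<in> S" for r a using S that by (simp add: csub_def)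
  qed
  hence "C *v v = complex_of_real c *s v" by (simp add: Mv)
  moreover have "v \<noteq> 0" using vn by auto
  ultimately show ?thesis using vS by blast
qed

lemma eigen_prop:
  assumes cub: "cubically_hyponormal (wshift A)"
    and pos: "\<And>n. pos_matrix (A n)"
    and inv: "\<And>n. invertible (A n)"
    and k: "k \<ge> 1" and c: "c > 0"
    and v1: "A k *v v = complex_of_real c *s v"
    and v2: "A (Suc k) *v v = complex_of_real c *s v"
  shows "A (k + m) *v v = complex_of_real c *s v \<and> A (Suc (k + m)) *v v = complex_of_real c *s v"
proof (induction m)
  case 0
  then show ?case using v1 v2 by simp
next
  case (Suc m)
  define j where "j = k + m - 1"
  have j: "k + m = Suc j" using k by (simp add: j_def)
  have a: "A (Suc j) *v v = complex_of_real c *s v" using Suc.IH j by simp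
  have b: "A (Suc (Suc j)) *v v = complex_of_real c *s v" using Suc.IH j by simp
  have "A (Suc (Suc (Suc j))) *v v = complex_of_real c *s v"
    by (rule stepA[OF cub pos inv c a b])
  then show ?case using Suc.IH j by simp
qed

lemma spectral_ind:
  fixes C :: "complex^'p^'p" and \<Phi> :: "complex^'p \<Rightarrow> bool"
  assumes hC: "herm C"
    and P0: "\<Phi> 0"
    and Padd: "\<And>a b. \<Phi> a \<Longrightarrow> \<Phi> b \<Longrightarrow> \<Phi> (a + b)"
    and Psc: "\<And>z a. \<Phi> a \<Longrightarrow> \<Phi> (z *s a)"
    and Peig: "\<And>v c. v \<in> S0 \<Longrightarrow> v \<noteq> 0 \<Longrightarrow> C *v v = complex_of_real c *s v \<Longrightarrow> \<Phi> v"
  shows "csub S \<Longrightarrow> (\<And>a. a \<in> S \<Longrightarrow> C *v a \<in> S) \<Longrightarrow> S \<subseteq> S0 \<Longrightarrow> x \<in> S \<Longrightarrow> \<Phi> x"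
proof (induction "dim S" arbitrary: S x rule: less_induct)
  case less
  show ?case
  proof (cases "S \<subseteq> {0}")
    case True
    then show ?thesis using less.prems P0 by auto
  next
    case False
    then obtain a where a: "a \<in> S" "a \<noteq> 0" by auto
    obtain v c where vS: "v \<in> S" and v0: "v \<noteq> 0" and Cv: "C *v v = complex_of_real c *s v"
      using eig_exists[OF hC less.prems(1) less.prems(2) a] by blast
    have Pv: "\<Phi> v" using Peig[OF _ v0 Cv] vS less.prems(3) by blast
    define S' where "S' = {w \<in> S. vinner w v = 0}"
    have cS: "csub S" by (rule less.prems(1))
    have cS': "csub S'"
      using cS unfolding csub_def S'_def by (auto simp: vinner_lin)
    have invS': "C *v w \<in> S'" if "w \<in> S'" for w
      using that less.prems(2) unfolding S'_def
      by (auto simp: herm_move[OF hC] Cv vinner_lin)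
    have sub': "S' \<subseteq> S0" using less.prems(3) by (auto simp: S'_def)
    have vn: "v \<notin> S'" using v0 by (simp add: S'_def vinner_self_eq0)
    have ps: "S' \<subset> S" using vS vn by (auto simp: S'_def)
    have sp1: "span S' = S'" using csub_subspace[OF cS'] by simp
    have sp2: "span S = S" using csub_subspace[OF cS] by simp
    have "dim S' < dim S"
      using ps by (intro dim_psubset) (simp add: sp1 sp2)
    hence IH: "\<And>y. y \<in> S' \<Longrightarrow> \<Phi> y"
      using less.hyps[OF _ cS' invS' sub'] by blast
    define \<alpha> where "\<alpha> = vinner x v / vinner v v"
    have vv: "vinner v v \<noteq> 0" using v0 by (simp add: vinner_self_eq0)
    have xS: "x \<in> S" by (rule less.prems(4))
    have "x - \<alpha> *s v \<in> S" using cS xS vS by (intro csub_diff) (auto simp: csub_def)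
    moreover have "vinner (x - \<alpha> *s v) v = 0"
      using vv by (simp add: vinner_lin \<alpha>_def)
    ultimately have "\<Phi> (x - \<alpha> *s v)" using IH by (simp add: S'_def)
    moreover have "\<Phi> (\<alpha> *s v)" using Psc[OF Pv] .
    ultimately have "\<Phi> ((x - \<alpha> *s v) + \<alpha> *s v)" by (rule Padd)
    then show ?thesis by simp
  qed
qed

theorem mainTheorem3:
  fixes A :: "nat \<Rightarrow> complex^'p^'p" and x :: "complex^'p" and k :: nat
  assumes pos: "\<And>n. pos_matrix (A n)"
    and inv: "\<And>n. invertible (A n)"
    and bdd: "\<exists>M. \<forall>n. onorm (\<lambda>v. A n *v v) \<le> M"
    and cub: "cubically_hyponormal (wshift A)"
    and unit: "norm x = 1"
    and k: "k \<ge> 1"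
    and eq: "A k *v x = A (Suc k) *v x"
  shows "\<forall>n\<ge>k. A n *v x = A k *v x"
proof -
  define K0 where "K0 = {v. A (Suc k) *v v = A k *v v}"
  define \<Phi> where "\<Phi> y \<longleftrightarrow> (\<forall>n\<ge>k. A n *v y = A k *v y)" for y
  have hC: "herm (A k)" by (rule pos_herm[OF pos])
  have cK: "csub K0" unfolding csub_def K0_def
    by (simp add: matrix_vector_right_distrib vector_scalar_commute)
  have invK: "A k *v a \<in> K0" if "a \<in> K0" for a
    using fact1[OF cub pos, of k a] that by (simp add: K0_def)
  have P0: "\<Phi> 0" by (simp add: \<Phi>_def)
  have Padd: "\<Phi> (a + b)" if "\<Phi> a" "\<Phi> b" for a b
    unfolding \<Phi>_def
  proof (intro allI impI)
    fix n assume "k \<le> n"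
    then have "A n *v a = A k *v a" "A n *v b = A k *v b" using that unfolding \<Phi>_def by blast+
    then show "A n *v (a + b) = A k *v (a + b)" by (simp only: matrix_vector_right_distrib)
  qed
  have Psc: "\<Phi> (z *s a)" if "\<Phi> a" for z a
    unfolding \<Phi>_def
  proof (intro allI impI)
    fix n assume "k \<le> n"
    then have "A n *v a = A k *v a" using that unfolding \<Phi>_def by blast
    then show "A n *v (z *s a) = A k *v (z *s a)" by (simp only: vector_scalar_commute)
  qed
  have Peig: "\<Phi> v" if vK: "v \<in> K0" and v0: "v \<noteq> 0" and Cv: "A k *v v = complex_of_real c *s v"
    for v c
  proof -
    have "0 \<le> Re (vinner (A k *v v) v)" using pos[of k] by (simp add: pos_matrix_def)
    also have "Re (vinner (A k *v v) v) = c * (norm v)^2" unfolding Cv by (simp add: vinner_lin vinner_self)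
    finally have c0: "0 \<le> c * (norm v)^2" .
    have "A k *v v \<noteq> 0"
      using inj_matrix_vector_mult[OF inv[of k]] v0 by (metis injD matrix_vector_mult_0_right)
    hence "c \<noteq> 0" using Cv by auto
    with c0 v0 have c: "c > 0" by (simp add: zero_le_mult_iff)
    have v2: "A (Suc k) *v v = complex_of_real c *s v" using vK Cv by (simp add: K0_def)
    show ?thesis unfolding \<Phi>_def
    proof (intro allI impI)
      fix n assume "k \<le> n"
      then obtain m where n: "n = k + m" by (metis le_add_diff_inverse)
      show "A n *v v = A k *v v"
        using eigen_prop[OF cub pos inv k c Cv v2, of m] n Cv by simp
    qed
  qed
  have "\<Phi> x"
  proof -
    have xK: "x \<in> K0" using eq by (simp add: K0_def)
    have sub: "K0 \<subseteq> K0" by (rule subset_refl)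
    show ?thesis by (rule spectral_ind[where S0=K0 and S=K0, OF hC P0 Padd Psc Peig cK invK sub xK])
  qed
  then show ?thesis unfolding \<Phi>_def .
qed

end
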